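(* For every instance such that $|S_2|>\pi_1+\pi_3+\pi_4-1$, $|S_2|\ge 3$ and $|S_2|$ is odd, we have $H^{PW''}\le \tfrac{24}{13}H^*$.
   Context: An instance consists of an integer $n\ge 1$ and growth rates $1=h(1)\ge h(2)\ge\cdots\ge h(n)>0$ of bamboos $b_1,\dots,b_n$. Bamboo Garden Trimming (discrete version): - All heights are $0$ initially. - On each day $t=1,2,\dots$ every bamboo $b_j$ grows by $h(j)$. - At the end of each day the gardener cuts exactly one bamboo $\sigma(t)\in\{1,\dots,n\}$ back to height $0$. The height of a schedule $\sigma:\mathbb{N}\to\{1,\dots,n\}$ is the supremum, over all days $t$ and all $j$, of the height of $b_j$ at the end of day $t$ just before the cut. $H^*$ denotes the infimum of this height over all schedules. Value of algorithm PW'': - Split $\{1,\dots,n\}$ into four sets: - $S_1=\{j: \tfrac23<h(j)\le 1\}$; - $S_2=\{j:\tfrac12<h(j)\le\tfrac23\}$; - $S_3=\{j: h(j)\le\tfrac12 \text{ and } \tfrac23 2^{-k}<h(j)\le 2^{-k}\text{ for some integer }k\ge1\}$; - $S_4=\{j: h(j)\le\tfrac12\text{ and } 2^{-(k+1)}<h(j)\le \tfrac23 2^{-k}\text{ for some integer }k\ge 1\}$. - Modified growths: $h''(j)=2^{-k}$ for $j\in S_3$ and $h''(j)=\tfrac23 2^{-k}$ for $j\in S_4$, with $k$ as in the definition of the set. - Let $\pi_1=|S_1|$, $sh_3=\sum_{j\in S_3}h''(j)$, $sh_4=\sum_{j\in S_4}h''(j)$, $\pi_3=\lfloor sh_3\rfloor$,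 $\pi_4=\lfloor sh_4\rfloor$, $f_3=sh_3-\pi_3$, $f_4=sh_4-\pi_4$. - Option (a): $\pi_R(a)=\lceil f_3+f_4\rceil$ and $z(a)=\pi_1+|S_2|+\pi_3+\pi_4+\pi_R(a)$. - Option (b): if $S_2=\emptyset$ put $z(b)=+\infty$. Otherwise let $h^*=\max_{j\in S_2}h(j)$ and $f_2=\tfrac12$ if $|S_2|$ is odd, $f_2=0$ if $|S_2|$ is even. Then $\pi_R(b)=\lceil f_2+f_3+f_4\rceil$ and $z(b)=2h^*\,(\pi_1+\lfloor |S_2|/2\rfloor+\pi_3+\pi_4+\pi_R(b))$. - The value returned by algorithm PW'' is $H^{PW''}=\min\{z(a),z(b)\}$. The paper takes this as the maximum height of the periodic pinwheel trimming schedule that it builds from these partitions. *)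

theory Defs
  imports Complex_Main "HOL-Library.Extended_Real"
begin

definition bgt_instance :: "nat \<Rightarrow> (nat \<Rightarrow> real) \<Rightarrow> bool" where
  "bgt_instance n h \<longleftrightarrow> n \<ge> 1 \<and> h 1 = 1 \<and>
     (\<forall>i j. 1 \<le> i \<longrightarrow> i \<le> j \<longrightarrow> j \<le> n \<longrightarrow> h j \<le> h i) \<and> h n > 0"

definition schedule :: "nat \<Rightarrow> (nat \<Rightarrow> nat) \<Rightarrow> bool" where
  "schedule n \<sigma> \<longleftrightarrow> (\<forall>t\<ge>1. \<sigma> t \<in> {1..n})"

definition last_cut :: "(nat \<Rightarrow> nat) \<Rightarrow> nat \<Rightarrow> nat \<Rightarrow> nat" where
  "last_cut \<sigma> j t = Max ({s. 1 \<le> s \<and> s < t \<and> \<sigma> s = j} \<union> {0})"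

text \<open>Height of bamboo j at the end of day t, just before the cut of day t.\<close>
definition height :: "(nat \<Rightarrow> real) \<Rightarrow> (nat \<Rightarrow> nat) \<Rightarrow> nat \<Rightarrow> nat \<Rightarrow> real" where
  "height h \<sigma> j t = h j * real (t - last_cut \<sigma> j t)"

definition sched_height :: "nat \<Rightarrow> (nat \<Rightarrow> real) \<Rightarrow> (nat \<Rightarrow> nat) \<Rightarrow> ereal" where
  "sched_height n h \<sigma> = (SUP p \<in> {p. 1 \<le> fst p \<and> 1 \<le> snd p \<and> snd p \<le> n}.
                            ereal (height h \<sigma> (snd p) (fst p)))"

definition Hstar :: "nat \<Rightarrow> (nat \<Rightarrow> real) \<Rightarrow> ereal" where
  "Hstar n h = (INF \<sigma> \<in> {\<sigma>. schedule n \<sigma>}. sched_height n h \<sigma>)"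

definition S1 :: "nat \<Rightarrow> (nat \<Rightarrow> real) \<Rightarrow> nat set" where
  "S1 n h = {j \<in> {1..n}. 2/3 < h j \<and> h j \<le> 1}"
definition S2 :: "nat \<Rightarrow> (nat \<Rightarrow> real) \<Rightarrow> nat set" where
  "S2 n h = {j \<in> {1..n}. 1/2 < h j \<and> h j \<le> 2/3}"
definition S3 :: "nat \<Rightarrow> (nat \<Rightarrow> real) \<Rightarrow> nat set" where
  "S3 n h = {j \<in> {1..n}. h j \<le> 1/2 \<and>
     (\<exists>k::nat. k \<ge> 1 \<and> 2/3 * (1/2)^k < h j \<and> h j \<le> (1/2)^k)}"
definition S4 :: "nat \<Rightarrow> (nat \<Rightarrow> real) \<Rightarrow> nat set" where
  "S4 n h = {j \<in> {1..n}. h j \<le> 1/2 \<and>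
     (\<exists>k::nat. k \<ge> 1 \<and> (1/2)^(k+1) < h j \<and> h j \<le> 2/3 * (1/2)^k)}"

definition h3 :: "(nat \<Rightarrow> real) \<Rightarrow> nat \<Rightarrow> real" where
  "h3 h j = (1/2) ^ (THE k::nat. k \<ge> 1 \<and> 2/3 * (1/2)^k < h j \<and> h j \<le> (1/2)^k)"
definition h4 :: "(nat \<Rightarrow> real) \<Rightarrow> nat \<Rightarrow> real" where
  "h4 h j = 2/3 * (1/2) ^ (THE k::nat. k \<ge> 1 \<and> (1/2)^(k+1) < h j \<and> h j \<le> 2/3 * (1/2)^k)"

definition sh3 :: "nat \<Rightarrow> (nat \<Rightarrow> real) \<Rightarrow> real" where
  "sh3 n h = (\<Sum>j\<in>S3 n h. h3 h j)"
definition sh4 :: "nat \<Rightarrow> (nat \<Rightarrow> real) \<Rightarrow> real" where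
  "sh4 n h = (\<Sum>j\<in>S4 n h. h4 h j)"

definition pi1 :: "nat \<Rightarrow> (nat \<Rightarrow> real) \<Rightarrow> int" where "pi1 n h = int (card (S1 n h))"
definition pi3 :: "nat \<Rightarrow> (nat \<Rightarrow> real) \<Rightarrow> int" where "pi3 n h = \<lfloor>sh3 n h\<rfloor>"
definition pi4 :: "nat \<Rightarrow> (nat \<Rightarrow> real) \<Rightarrow> int" where "pi4 n h = \<lfloor>sh4 n h\<rfloor>"
definition f3 :: "nat \<Rightarrow> (nat \<Rightarrow> real) \<Rightarrow> real" where "f3 n h = sh3 n h - pi3 n h"
definition f4 :: "nat \<Rightarrow> (nat \<Rightarrow> real) \<Rightarrow> real" where "f4 n h = sh4 n h - pi4 n h"

definition z_a :: "nat \<Rightarrow> (nat \<Rightarrow> real) \<Rightarrow> real" where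
  "z_a n h = real_of_int (pi1 n h + int (card (S2 n h)) + pi3 n h + pi4 n h
                          + \<lceil>f3 n h + f4 n h\<rceil>)"

definition z_b :: "nat \<Rightarrow> (nat \<Rightarrow> real) \<Rightarrow> ereal" where
  "z_b n h = (if S2 n h = {} then \<infinity> else
     (let hs = Max (h ` S2 n h);
          f2 = (if odd (card (S2 n h)) then 1/2 else (0::real))
      in ereal (2 * hs * real_of_int (pi1 n h + int (card (S2 n h) div 2) + pi3 n h + pi4 n h
                                       + \<lceil>f2 + f3 n h + f4 n h\<rceil>))))"

definition H_PW :: "nat \<Rightarrow> (nat \<Rightarrow> real) \<Rightarrow> ereal" where
  "H_PW n h = min (ereal (z_a n h)) (z_b n h)"

end

theory Submission imports Defs begin

lemma last_cut_props:
  shows "last_cut \<sigma> j t \<in> {s. 1 \<le> s \<and> s < t \<and> \<sigma> s = j} \<union> {0}"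
    and "last_cut \<sigma> j t \<le> t"
proof -
  have fin: "finite ({s. 1 \<le> s \<and> s < t \<and> \<sigma> s = j} \<union> {0})" by (rule finite_subset[of _ "{..t}"]) auto
  show "last_cut \<sigma> j t \<in> {s. 1 \<le> s \<and> s < t \<and> \<sigma> s = j} \<union> {0}"
    unfolding last_cut_def using Max_in[OF fin] by auto
  then show "last_cut \<sigma> j t \<le> t" by auto
qed

lemma block_cut:
  assumes hb: "\<forall>t\<ge>1. height h \<sigma> j t \<le> H" and hj: "h j > 0" and a: "a \<ge> 1"
  shows "\<exists>s. a \<le> s \<and> s < a + nat \<lfloor>H / h j\<rfloor> \<and> \<sigma> s = j"
proof -
  define l where "l = nat \<lfloor>H / h j\<rfloor>"
  define t where "t = a + l"
  define lc where "lc = last_cut \<sigma> j t"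
  have lcin: "lc \<in> {s. 1 \<le> s \<and> s < t \<and> \<sigma> s = j} \<union> {0}" and lct: "lc \<le> t"
    using last_cut_props unfolding lc_def by auto
  have "h j * real (t - lc) \<le> H" using hb a unfolding t_def lc_def height_def by auto
  hence "real (t - lc) \<le> H / h j" using hj by (simp add: field_simps mult.commute)
  hence "int (t - lc) \<le> \<lfloor>H / h j\<rfloor>" by (simp add: le_floor_iff)
  hence tl: "t - lc \<le> l" unfolding l_def by linarith
  hence "lc \<noteq> 0" unfolding t_def using a by auto
  hence "1 \<le> lc \<and> lc < t \<and> \<sigma> lc = j" using lcin by auto
  moreover have "a \<le> lc" using tl lct unfolding t_def by auto
  ultimately show ?thesis unfolding t_def l_def by auto
qed

lemma ell_pos:
  assumes hb: "\<forall>t\<ge>1. height h \<sigma> j t \<le> H" and hj: "h j > 0"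
  shows "nat \<lfloor>H / h j\<rfloor> \<ge> 1" and "H > 0"
proof -
  have e: "{s. 1 \<le> s \<and> s < (1::nat) \<and> \<sigma> s = j} = {}" by auto
  have "last_cut \<sigma> j 1 = 0" unfolding last_cut_def e by simp
  hence "h j \<le> H" using hb[rule_format, of 1] unfolding height_def by simp
  thus "H > 0" using hj by simp
  from \<open>h j \<le> H\<close> have "1 \<le> H / h j" using hj by simp
  thus "nat \<lfloor>H / h j\<rfloor> \<ge> 1" by linarith
qed

lemma count_cuts:
  assumes hb: "\<forall>t\<ge>1. height h \<sigma> j t \<le> H" and hj: "h j > 0"
  shows "T div nat \<lfloor>H / h j\<rfloor> \<le> card {t\<in>{1..T}. \<sigma> t = j}"
proof -
  define l where "l = nat \<lfloor>H / h j\<rfloor>"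
  have l1: "l \<ge> 1" using ell_pos[OF hb hj] unfolding l_def by simp
  define g where "g i = (SOME s. 1 + i*l \<le> s \<and> s < 1 + i*l + l \<and> \<sigma> s = j)" for i
  have g: "1 + i*l \<le> g i \<and> g i < 1 + i*l + l \<and> \<sigma> (g i) = j" for i
    unfolding g_def by (rule someI_ex) (use block_cut[OF hb hj, of "1+i*l"] in \<open>auto simp: l_def\<close>)
  have inj: "inj_on g {..<T div l}"
  proof (rule inj_onI)
    fix i i' assume "i \<in> {..<T div l}" "i' \<in> {..<T div l}" "g i = g i'"
    show "i = i'"
    proof (rule ccontr)
      assume "i \<noteq> i'"
      then consider "i < i'" | "i' < i" by linarith
      thus False
      proof cases
        case 1
        hence "(i+1)*l \<le> i'*l" by (intro mult_right_mono) auto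
        thus False using g[of i] g[of i'] \<open>g i = g i'\<close> by (auto simp: algebra_simps)
      next
        case 2
        hence "(i'+1)*l \<le> i*l" by (intro mult_right_mono) auto
        thus False using g[of i] g[of i'] \<open>g i = g i'\<close> by (auto simp: algebra_simps)
      qed
    qed
  qed
  have sub: "g ` {..<T div l} \<subseteq> {t\<in>{1..T}. \<sigma> t = j}"
  proof
    fix y assume "y \<in> g ` {..<T div l}"
    then obtain i where i: "i < T div l" "y = g i" by auto
    have "(i+1)*l \<le> (T div l)*l" using i by (intro mult_right_mono) auto
    also have "\<dots> \<le> T" by simp
    finally show "y \<in> {t\<in>{1..T}. \<sigma> t = j}" using g[of i] i by (auto simp: algebra_simps)
  qed
  have "card {..<T div l} \<le> card {t\<in>{1..T}. \<sigma> t = j}"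
    by (rule card_inj_on_le[OF inj sub]) auto
  thus ?thesis unfolding l_def by simp
qed

lemma sum_cards:
  assumes "schedule n \<sigma>"
  shows "(\<Sum>j\<in>{1..n}. card {t\<in>{1..T}. \<sigma> t = j}) = T"
proof -
  have "(\<Sum>j\<in>{1..n}. card {t\<in>{1..T}. \<sigma> t = j}) = card (\<Union>j\<in>{1..n}. {t\<in>{1..T}. \<sigma> t = j})"
    by (rule card_UN_disjoint[symmetric]) auto
  also have "(\<Union>j\<in>{1..n}. {t\<in>{1..T}. \<sigma> t = j}) = {1..T}"
    using assms unfolding schedule_def by auto
  finally show ?thesis by simp
qed

lemma height_bound_sum:
  assumes sch: "schedule n \<sigma>" and pos: "\<forall>j\<in>{1..n}. h j > 0" and n1: "n \<ge> 1"
    and hb: "\<forall>t\<ge>1. \<forall>j\<in>{1..n}. height h \<sigma> j t \<le> H"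
  shows "(\<Sum>j\<in>{1..n}. h j) \<le> H"
proof (rule ccontr)
  define S where "S = (\<Sum>j\<in>{1..n}. h j)"
  assume "\<not> S \<le> H"
  hence SH: "S > H" by (simp add: S_def)
  have hbj: "\<forall>t\<ge>1. height h \<sigma> j t \<le> H" if "j \<in> {1..n}" for j using hb that by auto
  have Hpos: "H > 0" using ell_pos(2)[OF hbj pos[rule_format]] n1 by auto
  have main: "real T * (S - H) \<le> real n * H" for T
  proof -
    have each: "real T * h j / H - 1 \<le> real (card {t\<in>{1..T}. \<sigma> t = j})" if j: "j \<in> {1..n}" for j
    proof -
      define l where "l = nat \<lfloor>H / h j\<rfloor>"
      have hj: "h j > 0" using pos j by auto
      have l1: "l \<ge> 1" using ell_pos[OF hbj[OF j] hj] unfolding l_def by simp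
      have lle: "real l \<le> H / h j" unfolding l_def using l1 l_def by linarith
      have c: "T div l \<le> card {t\<in>{1..T}. \<sigma> t = j}" using count_cuts[OF hbj[OF j] hj] unfolding l_def .
      have "real T = real (l * (T div l) + T mod l)" by (simp only: mult_div_mod_eq)
      also have "\<dots> = real l * real (T div l) + real (T mod l)" by (simp only: of_nat_add of_nat_mult)
      finally have dec: "real T = real l * real (T div l) + real (T mod l)" .
      have "real (T mod l) < real l" using l1 by simp
      hence "real T \<le> real l * (real (T div l) + 1)" using dec by (simp add: algebra_simps)
      hence "real T / real l \<le> real (T div l) + 1" using l1 by (simp add: pos_divide_le_eq mult.commute)
      hence "real T / real l - 1 \<le> real (T div l)" by linarith
      moreover have "real T * h j / H \<le> real T / real l"
      proof -
        have "real l * h j \<le> H" using lle hj by (simp add: field_simps)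
        hence "real T * (real l * h j) \<le> real T * H" by (intro mult_left_mono) auto
        thus ?thesis using l1 Hpos by (simp add: field_simps)
      qed
      ultimately show ?thesis using c by linarith
    qed
    have "(\<Sum>j\<in>{1..n}. real T * h j / H - 1) \<le> (\<Sum>j\<in>{1..n}. real (card {t\<in>{1..T}. \<sigma> t = j}))"
      by (rule sum_mono) (use each in auto)
    also have "\<dots> = real T" using sum_cards[OF sch, of T] by (metis of_nat_sum)
    finally have le1: "(\<Sum>j\<in>{1..n}. real T * h j / H - 1) \<le> real T" .
    have "(\<Sum>j\<in>{1..n}. real T * h j / H - 1) = (\<Sum>j\<in>{1..n}. real T * h j / H) - real n"
      by (simp add: sum_subtractf)
    also have "(\<Sum>j\<in>{1..n}. real T * h j / H) = (\<Sum>j\<in>{1..n}. real T * h j) / H"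
      by (rule sum_divide_distrib[symmetric])
    also have "(\<Sum>j\<in>{1..n}. real T * h j) = real T * S" unfolding S_def by (rule sum_distrib_left[symmetric])
    finally have "real T * S / H - real n \<le> real T" using le1 by simp
    hence "real T * S - real n * H \<le> real T * H" using Hpos by (simp add: field_simps)
    thus ?thesis by (simp add: algebra_simps)
  qed
  define T where "T = nat \<lceil>real n * H / (S - H)\<rceil> + 1"
  have "real n * H / (S - H) < real T" unfolding T_def by linarith
  hence "real n * H < real T * (S - H)" using SH by (simp add: field_simps)
  thus False using main[of T] by linarith
qed

lemma arith_core:
  fixes A c Q f x ca cb sig :: real
  assumes "A \<ge> 1" "c \<ge> 3" "c \<ge> A + Q" "0 \<le> f" "f < 2" "ca < f + 1" "cb < f + 3/2"
    "1/2 < x" "x \<le> 2/3" "sig \<ge> 1/3 + 2/3*A + x - 1/2 + c/2 + 2/3*(Q+f)" "Q \<ge> 0"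
  shows "A+c+Q+ca \<le> 24/13*sig \<or> 2*x*(A+(c-1)/2+Q+cb) \<le> 24/13*sig"
proof (cases "A+c+Q+ca \<le> 24/13*sig")
  case True then show ?thesis by simp
next
  case False
  define c0 where "c0 = 1/3 + 2/3*A - 1/2 + c/2 + 2/3*(Q+f)"
  define Nu where "Nu = A+(c-1)/2+Q+f+3/2"
  have p1: "A+c+Q+f+1 > 24/13*(c0+1/2)"
  proof -
    have "c0+1/2 < sig" using assms unfolding c0_def by argo
    hence "24/13*(c0+1/2) < 24/13*sig" by simp
    thus ?thesis using False assms by argo
  qed
  have p2: "c > 3*(A+Q) + 3*f - 5" using p1 unfolding c0_def by (simp add: field_simps)
  have key: "4/3*Nu \<le> 24/13*(c0+2/3)" 
  proof -
    have "10*c \<ge> 4*(A+Q+f)+16" using p2 assms(1-5) by argo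
    thus ?thesis unfolding c0_def Nu_def by argo
  qed
  have "2*x*(A+(c-1)/2+Q+cb) \<le> 2*x*Nu" using assms unfolding Nu_def by (intro mult_left_mono) auto
  also have "\<dots> = (3/2*x)*(4/3*Nu)" by simp
  also have "\<dots> \<le> (3/2*x)*(24/13*(c0+2/3))" using key assms by (intro mult_left_mono) auto
  also have "\<dots> = 24/13*((3/2*x)*c0 + x)" by (simp add: algebra_simps)
  also have "\<dots> \<le> 24/13*(c0 + x)"
  proof -
    have "c0 \<ge> 0" using assms unfolding c0_def by argo
    hence "(3/2*x)*c0 \<le> 1*c0" using assms by (intro mult_right_mono) auto
    thus ?thesis by (simp add: algebra_simps)
  qed
  also have "\<dots> \<le> 24/13*sig"
  proof -
    have "c0 + x \<le> sig" using assms unfolding c0_def by argo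
    thus ?thesis by simp
  qed
  finally show ?thesis by simp
qed

lemma pos_h:
  assumes "bgt_instance n h" "j \<in> {1..n}"
  shows "h j > 0" "h j \<le> 1"
proof -
  have mono: "\<forall>i j. 1 \<le> i \<longrightarrow> i \<le> j \<longrightarrow> j \<le> n \<longrightarrow> h j \<le> h i"
    using assms(1) unfolding bgt_instance_def by blast
  have "h n \<le> h j" using mono[rule_format, of j n] assms(2) by auto
  moreover have "h j \<le> h 1" using mono[rule_format, of 1 j] assms(2) by auto
  moreover have "h n > 0" "h 1 = 1" using assms(1) unfolding bgt_instance_def by auto
  ultimately show "h j > 0" "h j \<le> 1" by linarith+
qed

lemma Hstar_ge:
  assumes inst: "bgt_instance n h"
  shows "ereal (\<Sum>j\<in>{1..n}. h j) \<le> Hstar n h"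
  unfolding Hstar_def
proof (rule INF_greatest)
  fix \<sigma> assume "\<sigma> \<in> {\<sigma>. schedule n \<sigma>}"
  hence sch: "schedule n \<sigma>" by simp
  show "ereal (\<Sum>j\<in>{1..n}. h j) \<le> sched_height n h \<sigma>"
  proof (rule ccontr)
    assume "\<not> ?thesis"
    hence "sched_height n h \<sigma> < ereal (\<Sum>j\<in>{1..n}. h j)" by simp
    then obtain r where r: "sched_height n h \<sigma> < ereal r" "ereal r < ereal (\<Sum>j\<in>{1..n}. h j)"
      using ereal_dense2 by blast
    have "\<forall>t\<ge>1. \<forall>j\<in>{1..n}. height h \<sigma> j t \<le> r"
    proof (intro allI impI ballI)
      fix t j assume "(1::nat) \<le> t" "j \<in> {1..n}"
      hence "ereal (height h \<sigma> j t) \<le> sched_height n h \<sigma>" unfolding sched_height_def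
        using SUP_upper[of "(t,j)" "{p. 1 \<le> fst p \<and> 1 \<le> snd p \<and> snd p \<le> n}"
           "\<lambda>p. ereal (height h \<sigma> (snd p) (fst p))"] by auto
      hence "ereal (height h \<sigma> j t) < ereal r" using r(1) by (rule order.strict_trans1)
      thus "height h \<sigma> j t \<le> r" by simp
    qed
    hence "(\<Sum>j\<in>{1..n}. h j) \<le> r"
      using height_bound_sum[OF sch] pos_h[OF inst] inst unfolding bgt_instance_def by blast
    with r(2) show False by simp
  qed
qed

lemma half_pow_mono: "a < b \<Longrightarrow> (1/2::real)^b \<le> (1/2)^a / 2"
proof -
  assume "a < b"
  hence "(1/2::real)^b \<le> (1/2)^(Suc a)" by (intro power_decreasing) auto
  thus ?thesis by simp
qed

lemma the_k3:
  assumes "k\<ge>1 \<and> 2/3*(1/2)^k < y \<and> y \<le> (1/2::real)^k"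
  shows "(THE k::nat. k \<ge> 1 \<and> 2/3*(1/2)^k < y \<and> y \<le> (1/2::real)^k) = k"
proof (rule the_equality)
  show "k\<ge>1 \<and> 2/3*(1/2)^k < y \<and> y \<le> (1/2::real)^k" by fact
  fix k' assume k': "k'\<ge>1 \<and> 2/3*(1/2)^k' < y \<and> y \<le> (1/2::real)^k'"
  show "k' = k"
  proof (rule ccontr)
    assume "k' \<noteq> k"
    then consider "k' < k" | "k < k'" by linarith
    thus False
    proof cases
      case 1 thus False using half_pow_mono[OF 1] assms k' zero_less_power[of "1/2::real" k'] by linarith
    next
      case 2 thus False using half_pow_mono[OF 2] assms k' zero_less_power[of "1/2::real" k] by linarith
    qed
  qed
qed

lemma the_k4:
  assumes "k\<ge>1 \<and> (1/2)^(k+1) < y \<and> y \<le> 2/3*(1/2::real)^k"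
  shows "(THE k::nat. k \<ge> 1 \<and> (1/2)^(k+1) < y \<and> y \<le> 2/3*(1/2::real)^k) = k"
proof (rule the_equality)
  show "k\<ge>1 \<and> (1/2)^(k+1) < y \<and> y \<le> 2/3*(1/2::real)^k" by fact
  fix k' assume k': "k'\<ge>1 \<and> (1/2)^(k'+1) < y \<and> y \<le> 2/3*(1/2::real)^k'"
  have e1: "(1/2::real)^(k+1) = (1/2)^k/2" "(1/2::real)^(k'+1) = (1/2)^k'/2" by simp_all
  show "k' = k"
  proof (rule ccontr)
    assume "k' \<noteq> k"
    then consider "k' < k" | "k < k'" by linarith
    thus False
    proof cases
      case 1 thus False using half_pow_mono[OF 1] assms k' e1 zero_less_power[of "1/2::real" k'] by linarith
    next
      case 2 thus False using half_pow_mono[OF 2] assms k' e1 zero_less_power[of "1/2::real" k] by linarith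
    qed
  qed
qed

lemma h3_bound:
  assumes "j \<in> S3 n h" shows "h3 h j \<le> 3/2 * h j" "h3 h j \<ge> 0"
proof -
  obtain k::nat where k: "k\<ge>1 \<and> 2/3*(1/2)^k < h j \<and> h j \<le> (1/2::real)^k"
    using assms unfolding S3_def by auto
  have "h3 h j = (1/2)^k" unfolding h3_def the_k3[OF k] ..
  thus "h3 h j \<le> 3/2 * h j" "h3 h j \<ge> 0" using k by auto
qed

lemma h4_bound:
  assumes "j \<in> S4 n h" shows "h4 h j \<le> 3/2 * h j" "h4 h j \<ge> 0"
proof -
  obtain k::nat where k: "k\<ge>1 \<and> (1/2)^(k+1) < h j \<and> h j \<le> 2/3*(1/2::real)^k"
    using assms unfolding S4_def by auto
  have "h4 h j = 2/3*(1/2)^k" unfolding h4_def the_k4[OF k] ..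
  moreover have "(1/2::real)^(k+1) = (1/2)^k/2" by simp
  ultimately show "h4 h j \<le> 3/2 * h j" "h4 h j \<ge> 0" using k by auto
qed

lemma S34_disj: "S3 n h \<inter> S4 n h = {}"
proof (rule ccontr)
  assume "S3 n h \<inter> S4 n h \<noteq> {}"
  then obtain j where j3: "j \<in> S3 n h" and j4: "j \<in> S4 n h" by auto
  obtain a::nat where a: "a\<ge>1 \<and> 2/3*(1/2)^a < h j \<and> h j \<le> (1/2::real)^a"
    using j3 unfolding S3_def by auto
  obtain b::nat where b: "b\<ge>1 \<and> (1/2)^(b+1) < h j \<and> h j \<le> 2/3*(1/2::real)^b"
    using j4 unfolding S4_def by auto
  have e: "(1/2::real)^(b+1) = (1/2)^b/2" by simp
  consider "a = b" | "a < b" | "b < a" by linarith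
  thus False
  proof cases
    case 1 thus False using a b by auto
  next
    case 2 thus False using half_pow_mono[OF 2] a b zero_less_power[of "1/2::real" a] by linarith
  next
    case 3
    have "(1/2::real)^a \<le> (1/2)^(b+1)" using 3 by (intro power_decreasing) auto
    thus False using a b by linarith
  qed
qed

lemma sum_decomp:
  assumes inst: "bgt_instance n h"
  shows "(\<Sum>j\<in>S1 n h. h j) + (\<Sum>j\<in>S2 n h. h j) + (\<Sum>j\<in>S3 n h. h j) + (\<Sum>j\<in>S4 n h. h j)
         \<le> (\<Sum>j\<in>{1..n}. h j)"
proof -
  have sub: "S1 n h \<subseteq> {1..n}" "S2 n h \<subseteq> {1..n}" "S3 n h \<subseteq> {1..n}" "S4 n h \<subseteq> {1..n}"
    unfolding S1_def S2_def S3_def S4_def by auto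
  have fin: "finite (S1 n h)" "finite (S2 n h)" "finite (S3 n h)" "finite (S4 n h)"
    using sub by (auto intro: finite_subset)
  have d1: "S1 n h \<inter> S2 n h = {}" unfolding S1_def S2_def by auto
  have d2: "(S1 n h \<union> S2 n h) \<inter> S3 n h = {}" unfolding S1_def S2_def S3_def by auto
  have d3: "(S1 n h \<union> S2 n h \<union> S3 n h) \<inter> S4 n h = {}"
    using S34_disj[of n h] unfolding S1_def S2_def S4_def by auto
  have eq: "(\<Sum>j\<in>S1 n h \<union> S2 n h \<union> S3 n h \<union> S4 n h. h j) =
        (\<Sum>j\<in>S1 n h. h j) + (\<Sum>j\<in>S2 n h. h j) + (\<Sum>j\<in>S3 n h. h j) + (\<Sum>j\<in>S4 n h. h j)"
    using fin d1 d2 d3 by (simp add: sum.union_disjoint)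
  have "(\<Sum>j\<in>S1 n h \<union> S2 n h \<union> S3 n h \<union> S4 n h. h j) \<le> (\<Sum>j\<in>{1..n}. h j)"
    by (rule sum_mono2) (use sub pos_h[OF inst] in \<open>auto intro: less_imp_le\<close>)
  thus ?thesis using eq by simp
qed

theorem proposition4:
  fixes n :: nat and h :: "nat \<Rightarrow> real"
  assumes "bgt_instance n h"
    and "int (card (S2 n h)) > pi1 n h + pi3 n h + pi4 n h - 1"
    and "card (S2 n h) \<ge> 3"
    and "odd (card (S2 n h))"
  shows "H_PW n h \<le> ereal (24/13) * Hstar n h"
proof -
  note inst = assms(1)
  define sig where "sig = (\<Sum>j\<in>{1..n}. h j)"
  have sub: "S1 n h \<subseteq> {1..n}" "S2 n h \<subseteq> {1..n}" "S3 n h \<subseteq> {1..n}" "S4 n h \<subseteq> {1..n}"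
    unfolding S1_def S2_def S3_def S4_def by auto
  have fin: "finite (S1 n h)" "finite (S2 n h)" "finite (S3 n h)" "finite (S4 n h)"
    using sub by (auto intro: finite_subset)
  have ne2: "S2 n h \<noteq> {}" using assms(3) by auto
  define x where "x = Max (h ` S2 n h)"
  have "x \<in> h ` S2 n h" unfolding x_def using fin(2) ne2 by (intro Max_in) auto
  then obtain j0 where j0: "j0 \<in> S2 n h" "h j0 = x" by auto
  have x: "1/2 < x" "x \<le> 2/3" using j0 unfolding S2_def by auto
  define A where "A = real (card (S1 n h))"
  define c where "c = real (card (S2 n h))"
  define Q where "Q = real_of_int (pi3 n h + pi4 n h)"
  define f where "f = f3 n h + f4 n h"
  have n1: "1 \<le> n" using inst unfolding bgt_instance_def by simp
  have oneS1: "1 \<in> S1 n h" using inst n1 unfolding bgt_instance_def S1_def by auto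
  have s1: "(\<Sum>j\<in>S1 n h. h j) \<ge> 1/3 + 2/3*A"
  proof -
    have "h 1 - 2/3 \<le> (\<Sum>j\<in>S1 n h. h j - 2/3)"
      by (rule member_le_sum[OF oneS1]) (use fin in \<open>auto simp: S1_def\<close>)
    moreover have "h 1 = 1" using inst unfolding bgt_instance_def by simp
    ultimately show ?thesis unfolding A_def by (simp add: sum_subtractf)
  qed
  have s2: "(\<Sum>j\<in>S2 n h. h j) \<ge> x - 1/2 + c/2"
  proof -
    have "h j0 - 1/2 \<le> (\<Sum>j\<in>S2 n h. h j - 1/2)"
      by (rule member_le_sum[OF j0(1)]) (use fin in \<open>auto simp: S2_def\<close>)
    thus ?thesis using j0 unfolding c_def by (simp add: sum_subtractf)
  qed
  have s3: "(\<Sum>j\<in>S3 n h. h j) \<ge> 2/3 * sh3 n h"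
  proof -
    have "sh3 n h \<le> (\<Sum>j\<in>S3 n h. 3/2 * h j)" unfolding sh3_def
      by (rule sum_mono) (rule h3_bound)
    moreover have "(\<Sum>j\<in>S3 n h. 3/2 * h j) = 3/2 * (\<Sum>j\<in>S3 n h. h j)" by (rule sum_distrib_left[symmetric])
    ultimately show ?thesis by linarith
  qed
  have s4: "(\<Sum>j\<in>S4 n h. h j) \<ge> 2/3 * sh4 n h"
  proof -
    have "sh4 n h \<le> (\<Sum>j\<in>S4 n h. 3/2 * h j)" unfolding sh4_def
      by (rule sum_mono) (rule h4_bound)
    moreover have "(\<Sum>j\<in>S4 n h. 3/2 * h j) = 3/2 * (\<Sum>j\<in>S4 n h. h j)" by (rule sum_distrib_left[symmetric])
    ultimately show ?thesis by linarith
  qed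
  have sh34: "sh3 n h + sh4 n h = Q + f" unfolding Q_def f_def f3_def f4_def by simp
  have sigb: "sig \<ge> 1/3 + 2/3*A + x - 1/2 + c/2 + 2/3*(Q+f)"
    using sum_decomp[OF inst] s1 s2 s3 s4 sh34 unfolding sig_def by argo
  have sh3nn: "sh3 n h \<ge> 0" unfolding sh3_def by (rule sum_nonneg) (rule h3_bound)
  have sh4nn: "sh4 n h \<ge> 0" unfolding sh4_def by (rule sum_nonneg) (rule h4_bound)
  have Qnn: "Q \<ge> 0" unfolding Q_def pi3_def pi4_def using sh3nn sh4nn by simp
  have f3r: "0 \<le> f3 n h" "f3 n h < 1" unfolding f3_def pi3_def by linarith+
  have f4r: "0 \<le> f4 n h" "f4 n h < 1" unfolding f4_def pi4_def by linarith+
  have f: "0 \<le> f" "f < 2" unfolding f_def using f3r f4r by auto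
  define ca where "ca = real_of_int \<lceil>f3 n h + f4 n h\<rceil>"
  define cb where "cb = real_of_int \<lceil>1/2 + f3 n h + f4 n h\<rceil>"
  have ca: "ca < f + 1" unfolding ca_def f_def using ceiling_correct[of "f3 n h + f4 n h"] by linarith
  have cb: "cb < f + 3/2" unfolding cb_def f_def using ceiling_correct[of "1/2 + f3 n h + f4 n h"] by linarith
  have A1: "A \<ge> 1" unfolding A_def using fin(1) oneS1 card_gt_0_iff[of "S1 n h"] by auto
  have c3: "c \<ge> 3" unfolding c_def using assms(3) by simp
  have cAQ: "c \<ge> A + Q"
  proof -
    have "int (card (S2 n h)) \<ge> pi1 n h + pi3 n h + pi4 n h" using assms(2) by linarith
    hence "real_of_int (int (card (S2 n h))) \<ge> real_of_int (pi1 n h + pi3 n h + pi4 n h)" by linarith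
    thus ?thesis unfolding c_def A_def Q_def pi1_def by simp
  qed
  have za: "z_a n h = A + c + Q + ca"
    unfolding z_a_def A_def c_def Q_def ca_def pi1_def f3_def f4_def by simp
  have cdiv: "real (card (S2 n h) div 2) = (c - 1)/2"
  proof -
    obtain m where "card (S2 n h) = 2*m+1" using assms(4) oddE by blast
    thus ?thesis unfolding c_def by simp
  qed
  have zb: "z_b n h = ereal (2*x*(A+(c-1)/2+Q+cb))"
    unfolding z_b_def using ne2 assms(4) unfolding Let_def x_def[symmetric]
    by (simp add: A_def Q_def cb_def pi1_def cdiv[symmetric] add.assoc)
  have disj: "A+c+Q+ca \<le> 24/13*sig \<or> 2*x*(A+(c-1)/2+Q+cb) \<le> 24/13*sig"
    by (rule arith_core[OF A1 c3 cAQ f ca cb x sigb Qnn])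
  have "H_PW n h \<le> ereal (24/13*sig)"
    using disj unfolding H_PW_def za zb by (auto simp: min_le_iff_disj)
  also have "\<dots> = ereal (24/13) * ereal sig" by simp
  also have "\<dots> \<le> ereal (24/13) * Hstar n h"
    by (rule ereal_mult_left_mono) (use Hstar_ge[OF inst] in \<open>auto simp: sig_def\<close>)
  finally show ?thesis .
qed

end
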